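(* Let $k\ge 1$, let $\mathcal{F} \subset \binom{[n]}{k}$ with $|\mathcal{F}|=m$, let $0 < \epsilon \leq \frac{1}{2}$ and suppose $n>2 \log \frac{1}{\epsilon}+k$. Suppose that $\beta(\mathcal{F}) \leq (1-\theta)m(n-k)$ for some $0 < \theta \leq 1$. Then there exists a subfamily $S \subset \mathcal{F}$ such that $$|\Gamma(S)| \geq (1-\epsilon) \theta m \quad\text{and}\quad |S| < \Big(20\log\tfrac{1}{\epsilon}\Big) \cdot \frac{m}{n-k} +2\log\frac{1}{\epsilon \theta}.$$
   Context: $\log$ is the natural logarithm. For $\sigma\in\mathcal{F}$, $\beta_{\mathcal{F}}(\sigma)=|\{\tau\in\binom{[n]}{k+1}: \binom{\tau}{k}\cap\mathcal{F}=\{\sigma\}\}|$ (the number of $(k+1)$-sets containing $\sigma$ and no other member of $\mathcal{F}$), and $\beta(\mathcal{F})=\sum_{\sigma\in\mathcal{F}}\beta_{\mathcal{F}}(\sigma)$. For $S\subset\mathcal{F}$, $\Gamma(S)=\{\eta\in\mathcal{F}: |\eta\cap\sigma|=k-1 \text{ for some } \sigma\in S\}$. *)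

theory Defs
  imports Complex_Main
begin

definition ksubsets :: "nat set \<Rightarrow> nat \<Rightarrow> nat set set" where
  "ksubsets A k = {B. B \<subseteq> A \<and> card B = k}"

definition beta_at :: "nat \<Rightarrow> nat \<Rightarrow> nat set set \<Rightarrow> nat set \<Rightarrow> nat" where
  "beta_at n k F \<sigma> = card {\<tau> \<in> ksubsets {1..n} (k+1). ksubsets \<tau> k \<inter> F = {\<sigma>}}"

definition beta :: "nat \<Rightarrow> nat \<Rightarrow> nat set set \<Rightarrow> nat" where
  "beta n k F = (\<Sum>\<sigma>\<in>F. beta_at n k F \<sigma>)"

definition Gamma :: "nat \<Rightarrow> nat set set \<Rightarrow> nat set set \<Rightarrow> nat set set" where
  "Gamma k F S = {\<eta> \<in> F. \<exists>\<sigma>\<in>S. card (\<eta> \<inter> \<sigma>) = k - 1}"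

end

theory Submission imports Defs "HOL-Analysis.Convex" "HOL-Library.FuncSet" begin

lemma deg_beta:
  assumes FS: "F \<subseteq> ksubsets {1..n} k" and sF: "\<sigma> \<in> F"
  shows "n - k \<le> beta_at n k F \<sigma> + card {v\<in>F. card (\<sigma> \<inter> v) = k - 1}"
proof -
  have s1: "\<sigma> \<subseteq> {1..n}" and s2: "card \<sigma> = k" using FS sF by (auto simp: ksubsets_def)
  have fs: "finite \<sigma>" using s1 finite_subset by blast
  define A where "A = {1..n} - \<sigma>"
  have cA: "card A = n - k" unfolding A_def using s1 s2 by (simp add: card_Diff_subset fs)
  define Bs where "Bs = {\<tau> \<in> ksubsets {1..n} (k+1). ksubsets \<tau> k \<inter> F = {\<sigma>}}"
  define N where "N = {v\<in>F. card (\<sigma> \<inter> v) = k - 1}"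
  have finF: "finite F" using FS by (rule finite_subset) (auto simp: ksubsets_def)
  have finN: "finite N" unfolding N_def using finF by simp
  have finBs: "finite Bs" unfolding Bs_def ksubsets_def
    by (rule finite_subset[of _ "Pow {1..n}"]) auto
  define A1 where "A1 = {x\<in>A. insert x \<sigma> \<in> Bs}"
  define A2 where "A2 = {x\<in>A. insert x \<sigma> \<notin> Bs}"
  have AU: "A = A1 \<union> A2" unfolding A1_def A2_def by auto
  have c1: "card A1 \<le> card Bs"
  proof (rule card_inj_on_le[of "\<lambda>x. insert x \<sigma>"])
    show "inj_on (\<lambda>x. insert x \<sigma>) A1" unfolding inj_on_def A1_def A_def by blast
    show "(\<lambda>x. insert x \<sigma>) ` A1 \<subseteq> Bs" unfolding A1_def by auto
  qed (rule finBs)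
  have "A2 \<subseteq> (\<lambda>\<eta>. the_elem (\<eta> - \<sigma>)) ` N"
  proof
    fix x assume x: "x \<in> A2"
    hence xA: "x \<in> {1..n}" "x \<notin> \<sigma>" unfolding A2_def A_def by auto
    let ?t = "insert x \<sigma>"
    have tk: "?t \<in> ksubsets {1..n} (k+1)" using xA s1 s2 fs by (auto simp: ksubsets_def)
    have sin: "\<sigma> \<in> ksubsets ?t k \<inter> F" using sF s2 by (auto simp: ksubsets_def)
    have "ksubsets ?t k \<inter> F \<noteq> {\<sigma>}" using x tk unfolding A2_def Bs_def by auto
    then obtain \<eta> where e: "\<eta> \<in> ksubsets ?t k" "\<eta> \<in> F" "\<eta> \<noteq> \<sigma>" using sin by blast
    have esub: "\<eta> \<subseteq> ?t" and ek: "card \<eta> = k" using e by (auto simp: ksubsets_def)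
    have xe: "x \<in> \<eta>"
    proof (rule ccontr)
      assume "x \<notin> \<eta>"
      hence "\<eta> \<subseteq> \<sigma>" using esub by auto
      hence "\<eta> = \<sigma>" using ek s2 fs by (simp add: card_subset_eq)
      thus False using e by simp
    qed
    have d: "\<eta> - \<sigma> = {x}" using xe esub xA by auto
    have fe: "finite \<eta>" using esub fs finite_subset by blast
    have "\<sigma> \<inter> \<eta> = \<eta> - {x}" using esub xA by auto
    hence "card (\<sigma> \<inter> \<eta>) = k - 1" using ek xe fe by simp
    hence "\<eta> \<in> N" unfolding N_def using e by simp
    thus "x \<in> (\<lambda>\<eta>. the_elem (\<eta> - \<sigma>)) ` N" using d by (intro rev_image_eqI[of \<eta>]) simp_all
  qed
  hence c2: "card A2 \<le> card N" using finN by (meson card_image_le card_mono finite_imageI le_trans)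
  have "card A \<le> card A1 + card A2" unfolding AU by (rule card_Un_le)
  thus ?thesis using c1 c2 cA unfolding beta_at_def Bs_def N_def by linarith
qed

lemma expb:
  fixes e x :: real
  assumes "0 < e" "e \<le> 1" "0 \<le> x" "x \<le> 1"
  shows "exp (- (ln (1/e) * x)) \<le> 1 - (1 - e) * x"
proof -
  have "exp ((1 - x) *\<^sub>R 0 + x *\<^sub>R ln e) \<le> (1 - x) * exp 0 + x * exp (ln e)"
    using assms by (intro convex_onD[OF exp_convex]) auto
  moreover have "- (ln (1/e) * x) = (1 - x) *\<^sub>R 0 + x *\<^sub>R ln e" using assms by (simp add: ln_div)
  ultimately show ?thesis using assms by (simp add: algebra_simps)
qed

lemma avg:
  fixes F :: "'a set" and N :: "'a \<Rightarrow> 'a set" and t :: nat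
  assumes finF: "finite F" and ne: "F \<noteq> {}" and NF: "\<And>\<sigma>. \<sigma> \<in> F \<Longrightarrow> N \<sigma> \<subseteq> F"
  shows "\<exists>f \<in> PiE {..<t} (\<lambda>_. F). real (card {\<sigma>\<in>F. \<forall>i<t. f i \<notin> N \<sigma>}) * real (card F) ^ t
           \<le> (\<Sum>\<sigma>\<in>F. real (card F - card (N \<sigma>)) ^ t)"
proof (rule ccontr)
  define P where "P = PiE {..<t} (\<lambda>_. F)"
  assume "\<not> ?thesis"
  hence lt: "\<And>f. f \<in> P \<Longrightarrow> (\<Sum>\<sigma>\<in>F. real (card F - card (N \<sigma>)) ^ t) / real (card F) ^ t
      < real (card {\<sigma>\<in>F. \<forall>i<t. f i \<notin> N \<sigma>})"
    unfolding P_def using finF ne by (auto simp: not_le pos_divide_less_eq card_gt_0_iff)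
  have finP: "finite P" unfolding P_def using finF by (simp add: finite_PiE)
  have neP: "P \<noteq> {}" unfolding P_def using ne by (simp add: PiE_eq_empty_iff)
  have cP: "card P = card F ^ t" unfolding P_def using finF by (simp add: card_PiE)
  have "(\<Sum>f\<in>P. (\<Sum>\<sigma>\<in>F. real (card F - card (N \<sigma>)) ^ t) / real (card F) ^ t)
      < (\<Sum>f\<in>P. real (card {\<sigma>\<in>F. \<forall>i<t. f i \<notin> N \<sigma>}))"
    using finP neP lt by (intro sum_strict_mono) auto
  note lt2 = this
  have "(\<Sum>f\<in>P. card {\<sigma>\<in>F. \<forall>i<t. f i \<notin> N \<sigma>}) = (\<Sum>f\<in>P. \<Sum>\<sigma>\<in>F. if (\<forall>i<t. f i \<notin> N \<sigma>) then 1 else 0)"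
    using finF by (simp add: sum.If_cases Int_def)
  also have "\<dots> = (\<Sum>\<sigma>\<in>F. \<Sum>f\<in>P. if (\<forall>i<t. f i \<notin> N \<sigma>) then 1 else 0)" by (rule sum.swap)
  also have "\<dots> = (\<Sum>\<sigma>\<in>F. card (PiE {..<t} (\<lambda>_. F - N \<sigma>)))"
  proof (rule sum.cong[OF refl])
    fix \<sigma> assume "\<sigma> \<in> F"
    have "{f\<in>P. \<forall>i<t. f i \<notin> N \<sigma>} = PiE {..<t} (\<lambda>_. F - N \<sigma>)"
      unfolding P_def by (auto simp: PiE_def Pi_def)
    thus "(\<Sum>f\<in>P. if (\<forall>i<t. f i \<notin> N \<sigma>) then 1 else 0) = card (PiE {..<t} (\<lambda>_. F - N \<sigma>))"
      using finP by (simp add: sum.If_cases Int_def)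
  qed
  also have "\<dots> = (\<Sum>\<sigma>\<in>F. (card F - card (N \<sigma>)) ^ t)"
  proof (rule sum.cong[OF refl])
    fix \<sigma> assume s: "\<sigma> \<in> F"
    have "finite (N \<sigma>)" using NF[OF s] finF finite_subset by blast
    thus "card (PiE {..<t} (\<lambda>_. F - N \<sigma>)) = (card F - card (N \<sigma>)) ^ t"
      using finF NF[OF s] by (simp add: card_PiE card_Diff_subset)
  qed
  finally have "(\<Sum>f\<in>P. card {\<sigma>\<in>F. \<forall>i<t. f i \<notin> N \<sigma>}) = (\<Sum>\<sigma>\<in>F. (card F - card (N \<sigma>)) ^ t)" .
  hence "real (\<Sum>f\<in>P. card {\<sigma>\<in>F. \<forall>i<t. f i \<notin> N \<sigma>}) = real (\<Sum>\<sigma>\<in>F. (card F - card (N \<sigma>)) ^ t)" by (rule arg_cong)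
  hence "(\<Sum>f\<in>P. real (card {\<sigma>\<in>F. \<forall>i<t. f i \<notin> N \<sigma>})) = (\<Sum>\<sigma>\<in>F. real (card F - card (N \<sigma>)) ^ t)" by (simp only: of_nat_sum of_nat_power)
  with lt2 have "(\<Sum>f\<in>P. (\<Sum>\<sigma>\<in>F. real (card F - card (N \<sigma>)) ^ t) / real (card F) ^ t)
      < (\<Sum>\<sigma>\<in>F. real (card F - card (N \<sigma>)) ^ t)"
    by simp
  moreover have "(\<Sum>f\<in>P. (\<Sum>\<sigma>\<in>F. real (card F - card (N \<sigma>)) ^ t) / real (card F) ^ t)
      = (\<Sum>\<sigma>\<in>F. real (card F - card (N \<sigma>)) ^ t)"
    using cP finF ne by (simp add: card_gt_0_iff)
  ultimately show False by simp
qed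



lemma dx_aux:
  fixes D b d :: real assumes "D > 0" "D \<le> b + d" "d \<ge> 0"
  shows "D * max 0 ((D - b) / D) \<le> d"
proof (cases "(D - b) / D \<le> 0")
  case True thus ?thesis using assms by (simp add: max_def)
next
  case False
  hence "max 0 ((D - b) / D) = (D - b) / D" by simp
  thus ?thesis using assms by simp
qed

lemma fin_aux: "a \<le> b \<Longrightarrow> 1/2 \<le> c \<Longrightarrow> a + 1 \<le> b + 2 * c" for a b c :: real
  by linarith

lemma ceil_lt: "real_of_int \<lceil>y\<rceil> < y + 1" for y :: real
  using ceiling_correct[of y] by linarith
theorem claim3p2:
  fixes n k m :: nat and F :: "nat set set" and \<epsilon> \<theta> :: real
  assumes "k \<ge> 1"
    and "F \<subseteq> ksubsets {1..n} k"
    and "card F = m"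
    and "0 < \<epsilon>" and "\<epsilon> \<le> 1/2"
    and "real n > 2 * ln (1/\<epsilon>) + real k"
    and "0 < \<theta>" and "\<theta> \<le> 1"
    and "real (beta n k F) \<le> (1 - \<theta>) * real m * real (n - k)"
  shows "\<exists>S \<subseteq> F. real (card (Gamma k F S)) \<ge> (1 - \<epsilon>) * \<theta> * real m
            \<and> real (card S) < (20 * ln (1/\<epsilon>)) * real m / real (n - k) + 2 * ln (1 / (\<epsilon> * \<theta>))"
proof -
  note FS = assms(2)
  have finF: "finite F" using FS by (rule finite_subset) (auto simp: ksubsets_def)
  define L where "L = ln (1/\<epsilon>)"
  have L0: "L > 0" unfolding L_def using assms(4,5) by simp
  have et: "\<epsilon> * \<theta> \<le> 1/2" using mult_left_mono[of \<theta> 1 \<epsilon>] assms(4,5,7,8) by linarith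
  have etp: "\<epsilon> * \<theta> > 0" using assms(4,7) by simp
  have lnet: "ln (1 / (\<epsilon> * \<theta>)) \<ge> 1/2"
  proof -
    have "ln (\<epsilon> * \<theta>) \<le> \<epsilon> * \<theta> - 1" using etp by (rule ln_le_minus_one)
    thus ?thesis using etp et assms(4,7) by (simp add: ln_div)
  qed
  have nk: "real n > real k" using assms(6) L0 unfolding L_def by linarith
  hence nkp: "real (n - k) > 0" by simp
  have nkr: "real (n - k) = real n - real k" using nk by simp
  have LLe: "L \<le> real (n - k)" using assms(6) nkr L0 unfolding L_def by linarith
  show ?thesis
  proof (cases "m = 0")
    case True
    hence "F = {}" using finF assms(3) by simp
    thus ?thesis using lnet L0 True by (intro exI[of _ "{}"]) (simp add: Gamma_def)
  next
    case False
    hence mp: "m > 0" by simp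
    hence Fne: "F \<noteq> {}" using assms(3) by auto
    define N where "N = (\<lambda>\<sigma>. {v\<in>F. card (\<sigma> \<inter> v) = k - 1})"
    define t where "t = nat \<lceil>L * real m / real (n - k)\<rceil>"
    have c00: "L * real m / real (n - k) \<ge> 0" using L0 nkp by simp
    have c0: "\<lceil>L * real m / real (n - k)\<rceil> \<ge> 0" using ceiling_mono[OF c00] by simp
    have tr: "real t = of_int \<lceil>L * real m / real (n - k)\<rceil>" unfolding t_def using c0 by simp
    have tge: "real t \<ge> L * real m / real (n - k)" unfolding tr by simp
    have tlt: "real t < L * real m / real (n - k) + 1" unfolding tr
      by (rule ceil_lt)
    obtain f where f: "f \<in> PiE {..<t} (\<lambda>_. F)"
      and fU: "real (card {\<sigma>\<in>F. \<forall>i<t. f i \<notin> N \<sigma>}) * real (card F) ^ t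
           \<le> (\<Sum>\<sigma>\<in>F. real (card F - card (N \<sigma>)) ^ t)"
      using avg[OF finF Fne, of N t] unfolding N_def by auto
    define S where "S = f ` {..<t}"
    define U where "U = {\<sigma>\<in>F. \<forall>i<t. f i \<notin> N \<sigma>}"
    have SF: "S \<subseteq> F" unfolding S_def using f by (auto simp: PiE_def Pi_def)
    have cS: "card S \<le> t" unfolding S_def using card_image_le[of "{..<t}" f] by simp
    have fi: "\<And>i. i < t \<Longrightarrow> f i \<in> F" using f by (auto simp: PiE_def Pi_def)
    have GU: "Gamma k F S = F - U"
      unfolding Gamma_def U_def S_def N_def using fi by auto
    have finU: "finite U" unfolding U_def using finF by simp
    have UF: "U \<subseteq> F" unfolding U_def by auto
    have cUm: "card U \<le> m" using card_mono[OF finF UF] assms(3) by simp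
    have cG: "real (card (Gamma k F S)) = real m - real (card U)"
      unfolding GU using cUm card_Diff_subset[OF finU UF] assms(3) by (simp add: of_nat_diff)
    define x where "x = (\<lambda>\<sigma>. max 0 ((real (n - k) - real (beta_at n k F \<sigma>)) / real (n - k)))"
    have x01: "0 \<le> x \<sigma> \<and> x \<sigma> \<le> 1" for \<sigma> unfolding x_def using nkp by (auto simp: divide_le_eq_1)
    have per: "(real (card F - card (N \<sigma>)) / real m) ^ t \<le> 1 - (1 - \<epsilon>) * x \<sigma>" if s: "\<sigma> \<in> F" for \<sigma>
    proof -
      let ?d = "real (card (N \<sigma>))"
      have NFs: "N \<sigma> \<subseteq> F" unfolding N_def by auto
      have dm: "card (N \<sigma>) \<le> m" using card_mono[OF finF NFs] assms(3) by simp
      have db: "n - k \<le> beta_at n k F \<sigma> + card (N \<sigma>)" using deg_beta[OF FS s] unfolding N_def .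
      have dx: "?d \<ge> real (n - k) * x \<sigma>"
      proof -
        have "real (n - k) \<le> real (beta_at n k F \<sigma>) + ?d" using db by linarith
        thus ?thesis unfolding x_def using dx_aux[OF nkp, of "real (beta_at n k F \<sigma>)" ?d] by simp
      qed
      have "(real (card F - card (N \<sigma>)) / real m) = 1 - ?d / real m"
        using dm mp assms(3) by (simp add: of_nat_diff field_simps)
      also have "\<dots> \<le> exp (- (?d / real m))" using exp_ge_add_one_self[of "- (?d / real m)"] by simp
      finally have b1: "(real (card F - card (N \<sigma>)) / real m) ^ t \<le> exp (- (?d / real m)) ^ t"
        by (intro power_mono) (simp_all add: divide_nonneg_nonneg)
      have "exp (- (?d / real m)) ^ t = exp (- (real t * ?d / real m))"
        by (simp add: exp_of_nat_mult[symmetric])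
      also have "\<dots> \<le> exp (- (L * x \<sigma>))"
      proof -
        have "L * x \<sigma> \<le> L * (?d / real (n - k))" using dx nkp L0 by (intro mult_left_mono) (auto simp: field_simps)
        also have "\<dots> = (L * real m / real (n - k)) * ?d / real m" using mp by (simp add: field_simps)
        also have "\<dots> \<le> real t * ?d / real m" using tge mp by (intro divide_right_mono mult_right_mono) auto
        finally show ?thesis by simp
      qed
      also have "\<dots> \<le> 1 - (1 - \<epsilon>) * x \<sigma>" unfolding L_def using expb[of \<epsilon> "x \<sigma>"] assms(4,5) x01 by simp
      finally show ?thesis using b1 by simp
    qed
    have "real (card U) \<le> (\<Sum>\<sigma>\<in>F. (real (card F - card (N \<sigma>)) / real m) ^ t)"
      using fU mp assms(3) unfolding U_def by (simp add: power_divide sum_divide_distrib[symmetric] pos_le_divide_eq)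
    also have "\<dots> \<le> (\<Sum>\<sigma>\<in>F. 1 - (1 - \<epsilon>) * x \<sigma>)" using per by (rule sum_mono)
    also have "\<dots> = real m - (1 - \<epsilon>) * (\<Sum>\<sigma>\<in>F. x \<sigma>)"
      using assms(3) by (simp add: sum_subtractf sum_distrib_left)
    finally have cU: "real (card U) \<le> real m - (1 - \<epsilon>) * (\<Sum>\<sigma>\<in>F. x \<sigma>)" .
    have "\<theta> * real m \<le> (real m * real (n - k) - real (beta n k F)) / real (n - k)"
      using assms(9) nkp by (simp add: pos_le_divide_eq algebra_simps)
    also have "\<dots> = (\<Sum>\<sigma>\<in>F. (real (n - k) - real (beta_at n k F \<sigma>)) / real (n - k))"
      using assms(3) by (simp add: sum_divide_distrib[symmetric] sum_subtractf beta_def)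
    also have "\<dots> \<le> (\<Sum>\<sigma>\<in>F. x \<sigma>)"
      unfolding x_def by (intro sum_mono) simp
    finally have sx: "(\<Sum>\<sigma>\<in>F. x \<sigma>) \<ge> \<theta> * real m" .
    have g: "real (card (Gamma k F S)) \<ge> (1 - \<epsilon>) * \<theta> * real m"
    proof -
      have "(1 - \<epsilon>) * (\<theta> * real m) \<le> (1 - \<epsilon>) * (\<Sum>\<sigma>\<in>F. x \<sigma>)"
        using sx assms(5) by (intro mult_left_mono) auto
      thus ?thesis using cG cU by (simp add: mult.assoc)
    qed
    have "real (card S) < L * real m / real (n - k) + 1" by (meson cS of_nat_le_iff le_less_trans tlt)
    also have "\<dots> \<le> (20 * L) * real m / real (n - k) + 2 * ln (1 / (\<epsilon> * \<theta>))"
    proof -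
      have "L * real m / real (n - k) \<le> (20 * L) * real m / real (n - k)"
        using L0 nkp by (intro divide_right_mono) auto
      thus ?thesis using fin_aux lnet by blast
    qed
    finally show ?thesis using SF g unfolding L_def by blast
  qed
qed

end
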